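(* Let $X=(x_1,\ldots,x_n)$ and $Y=(y_1,\ldots,y_n)$ be two sequences of real numbers and let $p\in\{1,\dots,n\}$. Then for all $S\subseteq \{1,\dots,n\}$, $$|\mathrm{top}_p(X)-\mathrm{top}_p(Y)| \leq p\max_{i\in S} |x_i-y_i|+\sum_{i\in \{1,\dots,n\}\setminus S} |x_i-y_i|,$$ where $\mathrm{top}_p(Z)$ denotes the sum of the $p$ largest numbers in the sequence $Z$ (counted with multiplicity).
   Context: The maximum over an empty index set is interpreted as $0$. *)

theory Defs
  imports Complex_Main
begin

definition top_sum :: "nat \<Rightarrow> nat \<Rightarrow> (nat \<Rightarrow> real) \<Rightarrow> real" where
  "top_sum n p z = sum_list (take p (rev (sort (map z [1..<n+1]))))"

text \<open>Maximum over an index set, with the convention that the maximum over the empty set is 0.\<close>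
definition max0 :: "nat set \<Rightarrow> (nat \<Rightarrow> real) \<Rightarrow> real" where
  "max0 S f = (if S = {} then 0 else Max (f ` S))"

end

theory Submission
  imports Defs "HOL-Combinatorics.Permutations"
begin

lemma lemB:
  fixes h :: "nat \<Rightarrow> real"
  assumes dec: "\<And>i j. i \<le> j \<Longrightarrow> j < n \<Longrightarrow> h j \<le> h i"
    and J: "J \<subseteq> {..<n}" and cJ: "card J = p" and pn: "p \<le> n"
  shows "sum h J \<le> sum h {..<p}"
proof (cases "p = 0")
  case True
  then have "J = {}" using cJ J finite_subset by (metis card_0_eq finite_lessThan)
  then show ?thesis using True by simp
next
  case False
  define A where "A = {..<p}"
  define c where "c = h (p - 1)"
  have fJ: "finite J" using J finite_subset by blast
  have fA: "finite A" by (simp add: A_def)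
  have c1: "card (J - A) = card (A - J)"
  proof -
    have "card (J - A) = card J - card (J \<inter> A)" using fJ by (simp add: card_Diff_subset_Int)
    moreover have "card (A - J) = card A - card (A \<inter> J)" using fA by (simp add: card_Diff_subset_Int)
    ultimately show ?thesis using cJ by (simp add: A_def Int_commute)
  qed
  have s1: "sum h (J - A) \<le> real (card (J - A)) * c"
  proof -
    have "sum h (J - A) \<le> sum (\<lambda>_. c) (J - A)"
    proof (rule sum_mono)
      fix j assume "j \<in> J - A"
      then have "p - 1 \<le> j" "j < n" using J by (auto simp: A_def)
      then show "h j \<le> c" unfolding c_def by (rule dec)
    qed
    then show ?thesis by simp
  qed
  have s2: "real (card (A - J)) * c \<le> sum h (A - J)"
  proof -
    have "sum (\<lambda>_. c) (A - J) \<le> sum h (A - J)"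
    proof (rule sum_mono)
      fix j assume "j \<in> A - J"
      then have "j \<le> p - 1" "p - 1 < n" using pn False by (auto simp: A_def)
      then show "c \<le> h j" unfolding c_def by (rule dec)
    qed
    then show ?thesis by simp
  qed
  have "sum h J = sum h (J \<inter> A) + sum h (J - A)" using fJ by (metis sum.Int_Diff)
  moreover have "sum h A = sum h (A \<inter> J) + sum h (A - J)" using fA by (metis sum.Int_Diff)
  ultimately show ?thesis using s1 s2 c1 by (simp add: A_def Int_commute)
qed

lemma lemA:
  fixes z :: "nat \<Rightarrow> real"
  assumes pn: "p \<le> n"
  shows "\<exists>T. T \<subseteq> {1..n} \<and> card T = p \<and> top_sum n p z = sum z T \<and>
     (\<forall>U. U \<subseteq> {1..n} \<longrightarrow> card U = p \<longrightarrow> sum z U \<le> top_sum n p z)"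
proof -
  define L where "L = map z [1..<n+1]"
  define s where "s = rev (sort L)"
  have lL: "length L = n" by (simp add: L_def)
  have "mset s = mset L" by (simp add: s_def)
  then obtain \<pi> where pi: "\<pi> permutes {..<length L}" "permute_list \<pi> L = s"
    using mset_eq_permutation by metis
  define g where "g k = \<pi> k + 1" for k
  have sg: "s ! k = z (g k)" if "k < n" for k
  proof -
    have "\<pi> k < n" using pi(1) that lL permutes_in_image by fastforce
    have "s ! k = L ! (\<pi> k)" using permute_list_nth[OF pi(1)] that lL pi(2) by metis
    then show ?thesis using \<open>\<pi> k < n\<close> by (simp add: L_def g_def del: upt_Suc)
  qed
  have bij: "bij_betw g {..<n} {1..n}"
  proof -
    have b: "bij_betw \<pi> {..<n} {..<n}" using pi(1) lL permutes_imp_bij by metis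
    have b2: "bij_betw Suc {..<n} {1..n}"
      by (simp add: bij_betw_def inj_on_def image_Suc_lessThan)
    have "bij_betw (Suc \<circ> \<pi>) {..<n} {1..n}" using bij_betw_trans[OF b b2] .
    moreover have "Suc \<circ> \<pi> = g" by (auto simp: g_def)
    ultimately show ?thesis by simp
  qed
  have ls: "length s = n" using lL by (simp add: s_def)
  have top: "top_sum n p z = (\<Sum>k<p. z (g k))"
  proof -
    have "top_sum n p z = sum_list (take p s)" by (simp add: top_sum_def s_def L_def)
    also have "\<dots> = (\<Sum>k<p. take p s ! k)" using ls pn by (simp add: sum_list_sum_nth min_def atLeast0LessThan)
    also have "\<dots> = (\<Sum>k<p. z (g k))" using pn sg by (intro sum.cong) auto
    finally show ?thesis .
  qed
  have dec: "z (g j) \<le> z (g i)" if "i \<le> j" "j < n" for i j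
  proof -
    have so: "sorted (sort L)" by simp
    have "sort L ! (n - Suc j) \<le> sort L ! (n - Suc i)"
      using that lL by (intro sorted_nth_mono[OF so]) auto
    then have "s ! j \<le> s ! i" using that lL by (simp add: s_def rev_nth)
    then show ?thesis using sg that by simp
  qed
  have inj: "inj_on g {..<n}" using bij bij_betw_def by blast
  define T where "T = g ` {..<p}"
  have T1: "T \<subseteq> {1..n}" using bij pn unfolding T_def bij_betw_def by auto
  have sub: "{..<p} \<subseteq> {..<n}" using pn by auto
  have injp: "inj_on g {..<p}" using inj_on_subset[OF inj sub] .
  have T2: "card T = p" unfolding T_def using card_image[OF injp] by simp
  have T3: "top_sum n p z = sum z T" unfolding top T_def using sum.reindex[OF injp, of z] by (simp add: comp_def)
  have T4: "sum z U \<le> top_sum n p z" if U: "U \<subseteq> {1..n}" "card U = p" for U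
  proof -
    define J where "J = {k. k < n \<and> g k \<in> U}"
    have Jn: "J \<subseteq> {..<n}" by (auto simp: J_def)
    have UJ: "U = g ` J" using U(1) bij unfolding J_def bij_betw_def by auto
    have injJ: "inj_on g J" using inj_on_subset[OF inj Jn] .
    have cJ: "card J = p" using U(2) UJ card_image[OF injJ] by simp
    have "sum z U = (\<Sum>k\<in>J. z (g k))" using UJ sum.reindex[OF injJ, of z] by (simp add: comp_def)
    also have "\<dots> \<le> (\<Sum>k<p. z (g k))" using lemB[of n "\<lambda>k. z (g k)", OF dec Jn cJ pn] by simp
    finally show ?thesis using top by simp
  qed
  show ?thesis using T1 T2 T3 T4 by blast
qed

lemma oneside:
  fixes x y :: "nat \<Rightarrow> real" and n p :: nat and S :: "nat set"
  assumes "p \<in> {1..n}"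
    and "S \<subseteq> {1..n}"
  shows "top_sum n p x - top_sum n p y
           \<le> real p * max0 S (\<lambda>i. \<bar>x i - y i\<bar>) + (\<Sum>i\<in>{1..n} - S. \<bar>x i - y i\<bar>)"
proof -
  define d where "d = (\<lambda>i. \<bar>x i - y i\<bar>)"
  define M where "M = max0 S d"
  have pn: "p \<le> n" using assms by auto
  obtain T where T: "T \<subseteq> {1..n}" "card T = p" "top_sum n p x = sum x T"
    using lemA[OF pn, of x] by blast
  have ty: "sum y T \<le> top_sum n p y" using lemA[OF pn, of y] T by blast
  have fS: "finite S" using assms(2) finite_subset by blast
  have fT: "finite T" using T(1) finite_subset by blast
  have M0: "0 \<le> M"
  proof (cases "S = {}")
    case True then show ?thesis by (simp add: M_def max0_def)
  next
    case False
    then obtain i where "i \<in> S" by blast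
    then have "d i \<le> Max (d ` S)" using fS by simp
    moreover have "0 \<le> d i" by (simp add: d_def)
    ultimately show ?thesis using False by (simp add: M_def max0_def)
  qed
  have dM: "d i \<le> M" if "i \<in> S" for i
    using that fS by (auto simp: M_def max0_def)
  have "top_sum n p x - top_sum n p y \<le> sum x T - sum y T" using T ty by simp
  also have "\<dots> = (\<Sum>i\<in>T. x i - y i)" by (simp add: sum_subtractf)
  also have "\<dots> \<le> sum d T" by (intro sum_mono) (auto simp: d_def)
  also have "\<dots> = sum d (T \<inter> S) + sum d (T - S)" using fT by (metis sum.Int_Diff)
  also have "\<dots> \<le> real p * M + sum d ({1..n} - S)"
  proof (rule add_mono)
    have "sum d (T \<inter> S) \<le> sum (\<lambda>_. M) (T \<inter> S)" using dM by (intro sum_mono) auto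
    also have "\<dots> = real (card (T \<inter> S)) * M" by simp
    also have "\<dots> \<le> real p * M"
      using M0 T(2) fT by (intro mult_right_mono) (auto simp: card_mono)
    finally show "sum d (T \<inter> S) \<le> real p * M" .
    show "sum d (T - S) \<le> sum d ({1..n} - S)"
      using T(1) by (intro sum_mono2) (auto simp: d_def)
  qed
  finally show ?thesis unfolding M_def d_def .
qed

theorem lemma3p2:
  fixes x y :: "nat \<Rightarrow> real" and n p :: nat and S :: "nat set"
  assumes "p \<in> {1..n}"
    and "S \<subseteq> {1..n}"
  shows "\<bar>top_sum n p x - top_sum n p y\<bar>
           \<le> real p * max0 S (\<lambda>i. \<bar>x i - y i\<bar>) + (\<Sum>i\<in>{1..n} - S. \<bar>x i - y i\<bar>)"
proof -
  have e: "(\<lambda>i. \<bar>y i - x i\<bar>) = (\<lambda>i. \<bar>x i - y i\<bar>)" by (auto simp: abs_minus_commute)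
  have "top_sum n p y - top_sum n p x
           \<le> real p * max0 S (\<lambda>i. \<bar>y i - x i\<bar>) + (\<Sum>i\<in>{1..n} - S. \<bar>y i - x i\<bar>)"
    using oneside[OF assms] by blast
  then have "top_sum n p y - top_sum n p x
           \<le> real p * max0 S (\<lambda>i. \<bar>x i - y i\<bar>) + (\<Sum>i\<in>{1..n} - S. \<bar>x i - y i\<bar>)"
    by (simp only: e)
  then show ?thesis using oneside[OF assms, of x y] by linarith
qed

end
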